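(* Let $V$ be a finite alphabet of tokens containing an end-of-sequence token, $x$ a prompt, and $p^{(1)},p^{(2)}$ two language models. Let $p$ be the fused model defined iteratively by $$p(\cdot\mid y_{<t},x)=\arg\min_{p^*}\max_{i\in\{1,2\}}\ \mathbb{E}_{y_t\sim p^*}\log\frac{p^*(y_t)\,p(y_{<t}\mid x)}{p^{(i)}(y_{\le t}\mid x)},$$ where $p^*$ ranges over probability distributions on $V$ and $p(y_{<t}\mid x)=\prod_{s<t}p(y_s\mid y_{<s},x)$. Let $y_{<t}$ be any non-ending sequence (containing no end-of-sequence token), and assume that $p^{(i)}(\cdot\mid y_{<t},x)$ has full support on $V$ for both $i\in\{1,2\}$ and that $p^{(1)}(y_{<t}\mid x)>p^{(2)}(y_{<t}\mid x)$. Then at least one of the following holds: 1. $\mathbb{E}_{y_t\sim p(\cdot\mid y_{<t},x)}\log p^{(1)}(y_{\le t}\mid x)=\mathbb{E}_{y_t\sim p(\cdot\mid y_{<t},x)}\log p^{(2)}(y_{\le t}\mid x)$; 2. $p(y_t\mid y_{<t},x)=p^{(2)}(y_t\mid y_{<t},x)$ for all $y_t\in V$.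
   Context: A language model $p$ maps a prompt $x$ to a distribution over token sequences $y_{0:T}$ over a finite alphabet $V$ (with $y_T$ the end-of-sequence token), factorized as $p(y_{0:T}\mid x)=\prod_{t=0}^T p(y_t\mid y_{<t},x)$ with $y_{<0}=\emptyset$; for a prefix, $p^{(i)}(y_{\le t}\mid x)=\prod_{s\le t}p^{(i)}(y_s\mid y_{<s},x)$. The minimization defining $p(\cdot\mid y_{<t},x)$ is equivalent to minimizing $s$ over $(p^*,s)$ subject to $\mathrm{KL}(p^*\|p^{(i)}(\cdot\mid y_{<t},x))+\log\frac{p(y_{<t}\mid x)}{p^{(i)}(y_{<t}\mid x)}\le s$ for $i=1,2$, where $\mathrm{KL}$ is the Kullback–Leibler divergence. *)

theory Defs
  imports Complex_Main
begin

text \<open>Tokens form a finite type 'v.  A (conditional) language model is a function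
  m x ys y = m(y | ys, x): prompt x, prefix ys (a token list), next token y.\<close>

definition is_distribution :: "('v::finite \<Rightarrow> real) \<Rightarrow> bool" where
  "is_distribution q \<longleftrightarrow> (\<forall>y. 0 \<le> q y) \<and> (\<Sum>y\<in>UNIV. q y) = 1"

definition language_model :: "('x \<Rightarrow> 'v list \<Rightarrow> 'v::finite \<Rightarrow> real) \<Rightarrow> bool" where
  "language_model m \<longleftrightarrow> (\<forall>x ys. is_distribution (m x ys))"

definition prefix_prob :: "('x \<Rightarrow> 'v list \<Rightarrow> 'v \<Rightarrow> real) \<Rightarrow> 'x \<Rightarrow> 'v list \<Rightarrow> real" where
  "prefix_prob m x ys = (\<Prod>s<length ys. m x (take s ys) (ys ! s))"

text \<open>Kullback--Leibler divergence (with the convention 0 log 0 = 0).\<close>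
definition KL :: "('v::finite \<Rightarrow> real) \<Rightarrow> ('v \<Rightarrow> real) \<Rightarrow> real" where
  "KL q r = (\<Sum>y\<in>UNIV. q y * ln (q y / r y))"

text \<open>Objective of the fused model at prefix ys for a candidate next-token distribution q:
  max_i [ E_{y~q} log (q(y) p(ys|x) / p_i(ys @ [y] | x)) ]
  written as max_i [ KL(q || p_i(.|ys,x)) + log p(ys|x) - log p_i(ys|x) ].\<close>
definition fused_obj ::
  "('x \<Rightarrow> 'v list \<Rightarrow> 'v::finite \<Rightarrow> real) \<Rightarrow> ('x \<Rightarrow> 'v list \<Rightarrow> 'v \<Rightarrow> real) \<Rightarrow>
   ('x \<Rightarrow> 'v list \<Rightarrow> 'v \<Rightarrow> real) \<Rightarrow> 'x \<Rightarrow> 'v list \<Rightarrow> ('v \<Rightarrow> real) \<Rightarrow> real" where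
  "fused_obj p p1 p2 x ys q =
     max (KL q (p1 x ys) + ln (prefix_prob p x ys) - ln (prefix_prob p1 x ys))
         (KL q (p2 x ys) + ln (prefix_prob p x ys) - ln (prefix_prob p2 x ys))"

end

theory Submission
  imports Defs
begin

lemma term_ge:
  fixes u m s :: real
  assumes u: "u \<ge> 0" and m: "m > 0" and s: "s > 0"
  shows "u * ln (u / s) \<ge> u * ln (m / s) + u - m"
proof (cases "u = 0")
  case True then show ?thesis using m by simp
next
  case False
  then have up: "u > 0" using u by simp
  have "ln (m / u) \<le> m / u - 1" using ln_le_minus_one[of "m/u"] up m by simp
  then have "u * ln (m / u) \<le> u * (m / u - 1)" using up by (simp add: mult_left_mono)
  also have "\<dots> = m - u" using up by (simp add: field_simps)
  finally have "u * ln (m / u) \<le> m - u" .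
  moreover have "ln (m / u) = ln (m / s) - ln (u / s)" using up m s
    by (simp add: ln_div)
  ultimately show ?thesis by (simp add: algebra_simps)
qed

lemma KL_convex:
  fixes a b s :: "'v::finite \<Rightarrow> real" and t :: real
  assumes a: "\<forall>y. a y \<ge> 0" and b: "\<forall>y. b y \<ge> 0" and s: "\<forall>y. s y > 0"
    and t0: "0 \<le> t" and t1: "t \<le> 1"
    and m: "\<forall>y. (1 - t) * a y + t * b y > 0"
  shows "KL (\<lambda>y. (1 - t) * a y + t * b y) s \<le> (1 - t) * KL a s + t * KL b s"
proof -
  have "\<And>y. ((1 - t) * a y + t * b y) * ln (((1 - t) * a y + t * b y) / s y)
      \<le> (1 - t) * (a y * ln (a y / s y)) + t * (b y * ln (b y / s y))"
  proof -
    fix y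
    define M where "M = (1 - t) * a y + t * b y"
    have Mp: "M > 0" using m M_def by simp
    have ha: "a y * ln (a y / s y) \<ge> a y * ln (M / s y) + a y - M"
      using term_ge a Mp s by blast
    have hb: "b y * ln (b y / s y) \<ge> b y * ln (M / s y) + b y - M"
      using term_ge b Mp s by blast
    have "(1 - t) * (a y * ln (a y / s y)) + t * (b y * ln (b y / s y))
       \<ge> (1 - t) * (a y * ln (M / s y) + a y - M) + t * (b y * ln (M / s y) + b y - M)"
      using ha hb t0 t1 by (intro add_mono mult_left_mono) auto
    also have "(1 - t) * (a y * ln (M / s y) + a y - M) + t * (b y * ln (M / s y) + b y - M)
       = M * ln (M / s y)" unfolding M_def by (simp add: algebra_simps)
    finally show "?thesis y" unfolding M_def .
  qed
  then have "KL (\<lambda>y. (1 - t) * a y + t * b y) s \<le>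
     (\<Sum>y\<in>UNIV. (1 - t) * (a y * ln (a y / s y)) + t * (b y * ln (b y / s y)))"
    unfolding KL_def by (intro sum_mono) auto
  also have "\<dots> = (1 - t) * KL a s + t * KL b s"
    unfolding KL_def by (simp add: sum.distrib sum_distrib_left)
  finally show ?thesis .
qed

lemma KL_self: "(\<forall>y. r y > 0) \<Longrightarrow> KL r r = 0"
proof -
  assume "\<forall>y. r y > 0"
  then have "\<And>y. r y * ln (r y / r y) = 0" by (metis div_self less_irrefl ln_one mult_zero_right)
  then show ?thesis unfolding KL_def by (simp only:) simp
qed

lemma gibbs:
  fixes q r :: "'v::finite \<Rightarrow> real"
  assumes q: "is_distribution q" and r: "is_distribution r" and rp: "\<forall>y. r y > 0"
  shows "KL q r \<ge> 0" and "KL q r = 0 \<Longrightarrow> q = r"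
proof -
  define h where "h y = q y * ln (q y / r y) - (q y - r y)" for y
  have hnn: "\<forall>y. h y \<ge> 0"
  proof
    fix y
    have "q y * ln (q y / r y) \<ge> q y * ln (r y / r y) + q y - r y"
      using term_ge[of "q y" "r y" "r y"] q rp unfolding is_distribution_def by auto
    moreover have "r y / r y = 1" using rp by (metis div_self less_irrefl)
    ultimately show "h y \<ge> 0" unfolding h_def by simp
  qed
  have sq: "(\<Sum>y\<in>UNIV. q y) = 1" and sr: "(\<Sum>y\<in>UNIV. r y) = 1"
    using q r unfolding is_distribution_def by auto
  have hs: "(\<Sum>y\<in>UNIV. h y) = KL q r"
    unfolding h_def KL_def by (simp add: sum_subtractf sq sr)
  show "KL q r \<ge> 0" using hs hnn by (metis sum_nonneg)
  assume "KL q r = 0"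
  then have "\<forall>y. h y = 0" using hs hnn sum_nonneg_eq_0_iff[of UNIV h] by auto
  show "q = r"
  proof
    fix y
    have hy: "h y = 0" using \<open>\<forall>y. h y = 0\<close> by simp
    have ry: "r y > 0" using rp by simp
    show "q y = r y"
    proof (cases "q y = 0")
      case True then show ?thesis using hy ry unfolding h_def by simp
    next
      case False
      then have qy: "q y > 0" using q unfolding is_distribution_def by (metis less_eq_real_def)
      have e: "q y * ln (q y / r y) = q y - r y" using hy unfolding h_def by simp
      have "ln (q y / r y) = - ln (r y / q y)" using qy ry by (simp only: ln_div) simp
      with e have "q y * ln (r y / q y) = r y - q y" by simp
      then have "ln (r y / q y) = r y / q y - 1" using qy by (simp add: field_simps)
      then have "r y / q y = 1" using ln_eq_minus_one[of "r y / q y"] qy ry by simp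
      then show ?thesis using qy ry by (simp add: field_simps)
    qed
  qed
qed

lemma descent:
  fixes q r s1 s2 :: "'v::finite \<Rightarrow> real" and b1 b2 c :: real
  assumes q: "is_distribution q" and r: "is_distribution r" and rp: "\<forall>y. r y > 0"
    and s1: "\<forall>y. s1 y > 0" and s2: "\<forall>y. s2 y > 0"
    and gt: "KL q s1 - b1 > KL q s2 - b2"
    and dec: "KL q s1 > KL r s1"
  shows "\<exists>q'. is_distribution q' \<and>
     max (KL q' s1 + c - b1) (KL q' s2 + c - b2) < max (KL q s1 + c - b1) (KL q s2 + c - b2)"
proof -
  define D where "D = (KL q s1 - b1) - (KL q s2 - b2)"
  define K where "K = (KL r s2 - b2) - (KL q s2 - b2)"
  define t where "t = D / (2 * (D + \<bar>K\<bar>))"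
  have Dp: "D > 0" using gt D_def by simp
  have tp: "t > 0" using Dp unfolding t_def by simp
  have t1: "t \<le> 1/2" using Dp unfolding t_def by (simp add: field_simps)
  have tK: "t * K < D"
  proof -
    have "t * K \<le> t * \<bar>K\<bar>" using tp by (simp add: mult_left_mono)
    also have "t * \<bar>K\<bar> = D * \<bar>K\<bar> / (2 * (D + \<bar>K\<bar>))" unfolding t_def by simp
    also have "\<dots> \<le> D / 2" using Dp by (simp add: field_simps mult_left_mono)
    also have "\<dots> < D" using Dp by simp
    finally show ?thesis .
  qed
  define q' where "q' y = (1 - t) * q y + t * r y" for y
  have qn: "\<forall>y. q y \<ge> 0" and rn: "\<forall>y. r y \<ge> 0"
    using q r unfolding is_distribution_def by auto
  have mpos: "\<forall>y. (1 - t) * q y + t * r y > 0"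
  proof
    fix y
    have "(1 - t) * q y \<ge> 0" using qn t1 by simp
    moreover have "t * r y > 0" using tp rp by simp
    ultimately show "(1 - t) * q y + t * r y > 0" by simp
  qed
  have dq': "is_distribution q'"
    using q r mpos unfolding is_distribution_def q'_def
    by (auto simp: sum.distrib sum_distrib_left[symmetric] less_imp_le)
  have c1: "KL q' s1 \<le> (1 - t) * KL q s1 + t * KL r s1"
    unfolding q'_def using KL_convex[OF qn rn s1, of t] tp t1 mpos by simp
  have c2: "KL q' s2 \<le> (1 - t) * KL q s2 + t * KL r s2"
    unfolding q'_def using KL_convex[OF qn rn s2, of t] tp t1 mpos by simp
  have "(1 - t) * KL q s1 + t * KL r s1 < KL q s1"
    using dec tp by (simp add: algebra_simps)
  then have l1: "KL q' s1 + c - b1 < KL q s1 + c - b1" using c1 by simp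
  have "(1 - t) * KL q s2 + t * KL r s2 - b2 = (KL q s2 - b2) + t * K"
    unfolding K_def by (simp add: algebra_simps)
  then have l2: "KL q' s2 + c - b2 < KL q s1 + c - b1" using c2 tK D_def by simp
  have "max (KL q s1 + c - b1) (KL q s2 + c - b2) = KL q s1 + c - b1" using gt by simp
  then show ?thesis using l1 l2 dq' by (intro exI[of _ q']) simp
qed

theorem lemma4p2:
  fixes p p1 p2 :: "'x \<Rightarrow> 'v::finite list \<Rightarrow> 'v \<Rightarrow> real"
    and eos :: 'v and x :: 'x and ys :: "'v list"
  assumes lm1: "language_model p1" and lm2: "language_model p2"
    and lm: "language_model p"
    and fused: "is_arg_min (fused_obj p p1 p2 x ys) is_distribution (p x ys)"
    and nonend: "eos \<notin> set ys"
    and supp1: "\<forall>y. p1 x ys y > 0" and supp2: "\<forall>y. p2 x ys y > 0"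
    and pos2: "prefix_prob p2 x ys > 0"
    and gt: "prefix_prob p1 x ys > prefix_prob p2 x ys"
  shows "(\<Sum>y\<in>UNIV. p x ys y * ln (prefix_prob p1 x ys * p1 x ys y))
           = (\<Sum>y\<in>UNIV. p x ys y * ln (prefix_prob p2 x ys * p2 x ys y))
         \<or> (\<forall>y. p x ys y = p2 x ys y)"
proof -
  define q where "q = p x ys"
  define r1 where "r1 = p1 x ys"
  define r2 where "r2 = p2 x ys"
  define P1 where "P1 = prefix_prob p1 x ys"
  define P2 where "P2 = prefix_prob p2 x ys"
  define c where "c = ln (prefix_prob p x ys)"
  have P2p: "P2 > 0" and P1p: "P1 > 0" using pos2 gt unfolding P1_def P2_def by auto
  have lnlt: "ln P2 < ln P1" using P2p gt unfolding P1_def P2_def by simp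
  have dq: "is_distribution q" using lm unfolding q_def language_model_def by simp
  have dr1: "is_distribution r1" using lm1 unfolding r1_def language_model_def by simp
  have dr2: "is_distribution r2" using lm2 unfolding r2_def language_model_def by simp
  have rp1: "\<forall>y. r1 y > 0" using supp1 r1_def by simp
  have rp2: "\<forall>y. r2 y > 0" using supp2 r2_def by simp
  have obj: "\<And>q'. fused_obj p p1 p2 x ys q' = max (KL q' r1 + c - ln P1) (KL q' r2 + c - ln P2)"
    unfolding fused_obj_def r1_def r2_def c_def P1_def P2_def by simp
  have nolower: "\<not> (\<exists>q'. is_distribution q' \<and>
      max (KL q' r1 + c - ln P1) (KL q' r2 + c - ln P2) < max (KL q r1 + c - ln P1) (KL q r2 + c - ln P2))"
    using fused unfolding is_arg_min_def q_def obj by simp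
  have sq: "(\<Sum>y\<in>UNIV. q y) = 1" and qn: "\<forall>y. q y \<ge> 0"
    using dq unfolding is_distribution_def by auto
  have KLsplit: "KL q r = (\<Sum>y\<in>UNIV. q y * ln (q y)) - (\<Sum>y\<in>UNIV. q y * ln (r y))"
    if rp: "\<forall>y. r y > 0" for r
  proof -
    have "\<And>y. q y * ln (q y / r y) = q y * ln (q y) - q y * ln (r y)"
    proof -
      fix y
      show "q y * ln (q y / r y) = q y * ln (q y) - q y * ln (r y)"
      proof (cases "q y = 0")
        case True then show ?thesis by simp
      next
        case False then have "q y > 0" using qn by (metis less_eq_real_def)
        moreover have "r y > 0" using rp by simp
        ultimately show ?thesis by (simp only: ln_div) (simp add: algebra_simps)
      qed
    qed
    then show ?thesis unfolding KL_def by (simp add: sum_subtractf)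
  qed
  have Esplit: "(\<Sum>y\<in>UNIV. q y * ln (P * r y)) = ln P + (\<Sum>y\<in>UNIV. q y * ln (r y))"
    if rp: "\<forall>y. r y > 0" and Pp: "P > 0" for r P
  proof -
    have "(\<Sum>y\<in>UNIV. q y * ln (P * r y)) = (\<Sum>y\<in>UNIV. q y * ln P + q y * ln (r y))"
    proof (rule sum.cong[OF refl])
      fix y
      have "r y > 0" using rp by simp
      then show "q y * ln (P * r y) = q y * ln P + q y * ln (r y)"
        using Pp by (simp only: ln_mult) (simp add: algebra_simps)
    qed
    also have "\<dots> = ln P + (\<Sum>y\<in>UNIV. q y * ln (r y))"
      by (simp add: sum.distrib sum_distrib_right[symmetric] sq)
    finally show ?thesis .
  qed
  show ?thesis
  proof (cases "KL q r1 - ln P1 = KL q r2 - ln P2")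
    case True
    then have "ln P1 + (\<Sum>y\<in>UNIV. q y * ln (r1 y)) = ln P2 + (\<Sum>y\<in>UNIV. q y * ln (r2 y))"
      using KLsplit[OF rp1] KLsplit[OF rp2] by simp
    then show ?thesis
      using Esplit[OF rp1 P1p] Esplit[OF rp2 P2p] unfolding q_def r1_def r2_def P1_def P2_def
      by simp
  next
    case False
    show ?thesis
    proof (cases "KL q r1 - ln P1 > KL q r2 - ln P2")
      case True
      have g2: "KL q r2 \<ge> 0" using gibbs(1)[OF dq dr2 rp2] .
      have "KL q r1 > KL r1 r1"
        using KL_self[OF rp1] True g2 lnlt by simp
      from descent[OF dq dr1 rp1 rp1 rp2 True this, of c] nolower show ?thesis by simp
    next
      case F2: False
      with False have lt: "KL q r2 - ln P2 > KL q r1 - ln P1" by simp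
      have "KL q r2 \<le> KL r2 r2"
      proof (rule ccontr)
        assume "\<not> KL q r2 \<le> KL r2 r2"
        then have "KL q r2 > KL r2 r2" by simp
        from descent[OF dq dr2 rp2 rp2 rp1 lt this, of c] nolower show False
          by (simp add: max.commute)
      qed
      then have "KL q r2 = 0" using KL_self[OF rp2] gibbs(1)[OF dq dr2 rp2] by simp
      then have "q = r2" using gibbs(2)[OF dq dr2 rp2] by simp
      then show ?thesis unfolding q_def r2_def by simp
    qed
  qed
qed

end
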